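(* Let $\langle\mathcal G,\widehat{\mathcal P}\rangle$ be a $2\frac12$-player parity game with $\widehat{\mathcal P}=\langle\widehat B_1,\dots,\widehat B_\ell\rangle$, and let $v^0$ be a vertex of $\mathcal G$. Suppose $\pi_0^*$ is a deterministic memoryless strategy of Player 0 such that $\inf_{\pi_1}P_{v^0}^{\pi_0^*,\pi_1}(\mathcal G\models\mathit{Parity}(\widehat{\mathcal P}))=1$, the infimum ranging over all strategies $\pi_1$ of Player 1. Then for every finite run $v^0\dots v^n\in V^*$ for which there exists a Player 1 strategy $\pi_1$ with $P_{v^0}^{\pi_0^*,\pi_1}(\mathcal G\models v^0\dots v^n)>0$, and for every odd $i\in\{1,\dots,\ell\}$, $$v^n\in\widehat B_i\implies\inf_{\pi_1}P_{v^n}^{\pi_0^*,\pi_1}\Big(\mathcal G\models\lozenge\lozenge\big(\square\neg\widehat B_i\vee\textstyle\bigvee_{j\text{ even},\,j\in\{i+1,\dots,\ell\}}\widehat B_j\big)\Big)=1.$$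
   Context: A $2\frac12$-player game graph is $\mathcal G=\langle V,E,\langle V_0,V_1,V_r\rangle\rangle$ with $V$ finite, $E\subseteq V\times V$, and $V_0,V_1,V_r$ a partition of $V$; at $V_0$ (resp. $V_1$) vertices Player 0 (resp. Player 1) chooses a successor, at $V_r$ vertices the successor is chosen uniformly at random among the successors. Strategies of Player $i$ are maps $\pi_i:V^*V_i\to\mathit{Dist}(V)$ supported on successors of the last vertex; deterministic memoryless strategies choose a single successor depending only on the current vertex. $P_v^{\pi_0,\pi_1}$ is the induced probability measure on infinite runs from $v$, and $P_{v^0}^{\pi_0,\pi_1}(\mathcal G\models v^0\dots v^n)$ is the probability that the run begins with $v^0\dots v^n$. A $2\frac12$-player parity game is $\langle\mathcal G,\widehat{\mathcal P}\rangle$ with $\widehat{\mathcal P}=\langle\widehat B_1,\dots,\widehat B_\ell\rangle$ disjoint (possibly empty) subsets of $V$, such that every infinite run visits some nonempty $\widehat B_i$ infinitely often. A run satisfies $\mathit{Parity}(\widehat{\mathcal P})$ iff for every odd $i$, if it visits $\widehat B_i$ infinitely often then it visits $\widehat B_j$ infinitely often for some even $j\in\{i+1,\dots,\ell\}$. Temporal operators $\lozenge,\square$ have standard LTL semantics on runs. *)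

theory Defs
  imports "HOL-Probability.Probability" "HOL-Library.Linear_Temporal_Logic_on_Streams"
begin

definition game_graph :: "('v::finite \<times> 'v) set \<Rightarrow> 'v set \<Rightarrow> 'v set \<Rightarrow> 'v set \<Rightarrow> bool" where
  "game_graph E V0 V1 Vr \<longleftrightarrow>
     V0 \<union> V1 \<union> Vr = UNIV \<and> V0 \<inter> V1 = {} \<and> V0 \<inter> Vr = {} \<and> V1 \<inter> Vr = {}
     \<and> (\<forall>v. E `` {v} \<noteq> {})"

definition strategy :: "('v \<times> 'v) set \<Rightarrow> 'v set \<Rightarrow> ('v list \<Rightarrow> 'v pmf) \<Rightarrow> bool" where
  "strategy E Vi \<pi> \<longleftrightarrow> (\<forall>h. h \<noteq> [] \<longrightarrow> last h \<in> Vi \<longrightarrow> set_pmf (\<pi> h) \<subseteq> E `` {last h})"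

definition det_memoryless :: "('v \<times> 'v) set \<Rightarrow> 'v set \<Rightarrow> ('v list \<Rightarrow> 'v pmf) \<Rightarrow> bool" where
  "det_memoryless E Vi \<pi> \<longleftrightarrow> strategy E Vi \<pi> \<and>
     (\<exists>f. \<forall>h. h \<noteq> [] \<longrightarrow> last h \<in> Vi \<longrightarrow> \<pi> h = return_pmf (f (last h)))"

definition next_pmf :: "('v \<times> 'v) set \<Rightarrow> 'v set \<Rightarrow> 'v set \<Rightarrow> ('v list \<Rightarrow> 'v pmf)
     \<Rightarrow> ('v list \<Rightarrow> 'v pmf) \<Rightarrow> 'v list \<Rightarrow> 'v pmf" where
  "next_pmf E V0 V1 \<pi>0 \<pi>1 h =
     (if last h \<in> V0 then \<pi>0 h else if last h \<in> V1 then \<pi>1 h else pmf_of_set (E `` {last h}))"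

definition prefix_prob :: "('v \<times> 'v) set \<Rightarrow> 'v set \<Rightarrow> 'v set \<Rightarrow> ('v list \<Rightarrow> 'v pmf)
     \<Rightarrow> ('v list \<Rightarrow> 'v pmf) \<Rightarrow> 'v \<Rightarrow> 'v list \<Rightarrow> real" where
  "prefix_prob E V0 V1 \<pi>0 \<pi>1 v xs =
     (if xs = [] then 1
      else if hd xs \<noteq> v then 0
      else (\<Prod>k<length xs - 1. pmf (next_pmf E V0 V1 \<pi>0 \<pi>1 (take (Suc k) xs)) (xs ! Suc k)))"

text \<open>The induced probability measure P_v^{pi0,pi1} on infinite runs (streams), characterised
  as the unique probability measure on the product sigma-algebra with the given cylinder
  probabilities.\<close>
definition play_measure :: "('v::finite \<times> 'v) set \<Rightarrow> 'v set \<Rightarrow> 'v set \<Rightarrow> ('v list \<Rightarrow> 'v pmf)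
     \<Rightarrow> ('v list \<Rightarrow> 'v pmf) \<Rightarrow> 'v \<Rightarrow> 'v stream measure" where
  "play_measure E V0 V1 \<pi>0 \<pi>1 v =
     (THE M. prob_space M \<and> sets M = sets (stream_space (count_space UNIV)) \<and>
        (\<forall>xs. measure M {\<omega> \<in> space M. stake (length xs) \<omega> = xs} = prefix_prob E V0 V1 \<pi>0 \<pi>1 v xs))"

definition is_run :: "('v \<times> 'v) set \<Rightarrow> 'v stream \<Rightarrow> bool" where
  "is_run E \<omega> \<longleftrightarrow> (\<forall>k. (\<omega> !! k, \<omega> !! Suc k) \<in> E)"

definition parity_game :: "('v \<times> 'v) set \<Rightarrow> (nat \<Rightarrow> 'v set) \<Rightarrow> nat \<Rightarrow> bool" where
  "parity_game E B l \<longleftrightarrow>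
     (\<forall>i\<in>{1..l}. \<forall>j\<in>{1..l}. i \<noteq> j \<longrightarrow> B i \<inter> B j = {}) \<and>
     (\<forall>\<omega>. is_run E \<omega> \<longrightarrow> (\<exists>i\<in>{1..l}. B i \<noteq> {} \<and> alw (ev (holds (\<lambda>x. x \<in> B i))) \<omega>))"

definition Parity :: "(nat \<Rightarrow> 'v set) \<Rightarrow> nat \<Rightarrow> 'v stream \<Rightarrow> bool" where
  "Parity B l \<omega> \<longleftrightarrow>
     (\<forall>i\<in>{1..l}. odd i \<longrightarrow> alw (ev (holds (\<lambda>x. x \<in> B i))) \<omega> \<longrightarrow>
        (\<exists>j\<in>{i+1..l}. even j \<and> alw (ev (holds (\<lambda>x. x \<in> B j))) \<omega>))"

end

theory Submission
  imports Defs
begin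

definition pp :: "('v list \<Rightarrow> 'v pmf) \<Rightarrow> 'v \<Rightarrow> 'v list \<Rightarrow> real" where
 "pp D v xs = (if xs = [] then 1 else if hd xs \<noteq> v then 0
    else (\<Prod>k<length xs - 1. pmf (D (take (Suc k) xs)) (xs ! Suc k)))"

lemma prefix_prob_pp: "prefix_prob E V0 V1 \<pi>0 \<pi>1 v xs = pp (next_pmf E V0 V1 \<pi>0 \<pi>1) v xs"
  unfolding prefix_prob_def pp_def by simp

definition charM :: "('v list \<Rightarrow> 'v pmf) \<Rightarrow> 'v \<Rightarrow> 'v stream measure \<Rightarrow> bool" where
 "charM D v M \<longleftrightarrow> prob_space M \<and> sets M = sets (stream_space (count_space UNIV)) \<and>
    (\<forall>xs. measure M {\<omega>\<in>space M. stake (length xs) \<omega> = xs} = pp D v xs)"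

lemma stake_eq_iff: "stake (length xs) \<omega> = xs \<longleftrightarrow> (\<forall>i<length xs. \<omega> !! i = xs ! i)"
  by (metis length_stake nth_equalityI stake_nth)

lemma cyl_sstart: "{\<omega>. stake (length xs) \<omega> = xs} = sstart UNIV xs"
  using sstart_eq[of _ UNIV xs] by (auto simp: stake_eq_iff)

lemma space_S: "sets M = sets (stream_space (count_space UNIV)) \<Longrightarrow> space M = UNIV"
  using sets_eq_imp_space_eq[of M "stream_space (count_space UNIV)"] by (simp add: space_stream_space)

lemma charM_unique:
  fixes v :: "'v::countable"
  assumes "charM D v M" "charM D v N" shows "M = N"
proof (rule stream_space_eq_sstart[where S=UNIV])
  show "prob_space M" "prob_space N" using assms by (auto simp: charM_def)
  show "sets M = sets (stream_space (count_space UNIV))" "sets N = sets (stream_space (count_space UNIV))"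
    using assms by (auto simp: charM_def)
  show "AE x in M. x \<in> streams UNIV" "AE x in N. x \<in> streams UNIV"
  proof -
    have "space M = UNIV" "space N = UNIV" using assms space_S[of M] space_S[of N] by (simp_all add: charM_def)
    then show "AE x in M. x \<in> streams UNIV" "AE x in N. x \<in> streams UNIV" by auto
  qed
next
  fix xs :: "'v list"
  interpret M: prob_space M using assms by (auto simp: charM_def)
  interpret N: prob_space N using assms by (auto simp: charM_def)
  have sM: "space M = UNIV" "space N = UNIV" using assms space_S[of M] space_S[of N] by (simp_all add: charM_def)
  have inM: "sstart UNIV xs \<in> sets M" "sstart UNIV xs \<in> sets N"
    using assms sstart_sets by (auto simp: charM_def)
  have "measure M (sstart UNIV xs) = measure N (sstart UNIV xs)"
    using assms unfolding charM_def sM cyl_sstart[symmetric] by simp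
  then show "emeasure M (sstart UNIV xs) = emeasure N (sstart UNIV xs)"
    using inM by (simp add: M.emeasure_eq_measure N.emeasure_eq_measure)
qed simp

primrec hist :: "'v \<Rightarrow> ('v list \<Rightarrow> 'v) \<Rightarrow> nat \<Rightarrow> 'v list" where
  "hist v \<omega> 0 = [v]"
| "hist v \<omega> (Suc k) = hist v \<omega> k @ [\<omega> (hist v \<omega> k)]"

lemma length_hist[simp]: "length (hist v \<omega> k) = Suc k" by (induct k) auto

definition runF :: "'v \<Rightarrow> ('v list \<Rightarrow> 'v) \<Rightarrow> 'v stream" where
  "runF v \<omega> = smap (\<lambda>k. last (hist v \<omega> k)) nats"

lemma stake_runF: "stake (Suc k) (runF v \<omega>) = hist v \<omega> k"
proof (induct k)
  case 0 then show ?case by (simp add: runF_def)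
next
  case (Suc k)
  have "stake (Suc (Suc k)) (runF v \<omega>) = stake (Suc k) (runF v \<omega>) @ [runF v \<omega> !! Suc k]"
    by (rule stake_Suc)
  then show ?case using Suc by (simp add: runF_def)
qed

lemma hist_eq_iff: "length xs = Suc m \<Longrightarrow>
   hist v \<omega> m = xs \<longleftrightarrow> hd xs = v \<and> (\<forall>k<m. \<omega> (take (Suc k) xs) = xs ! Suc k)"
proof (induct m arbitrary: xs)
  case 0
  then obtain x where "xs = [x]" by (cases xs) auto
  then show ?case by auto
next
  case (Suc m)
  then obtain ys y where xs: "xs = ys @ [y]" by (cases xs rule: rev_exhaust) auto
  with Suc have ly: "length ys = Suc m" by simp
  have "hist v \<omega> (Suc m) = xs \<longleftrightarrow> hist v \<omega> m = ys \<and> \<omega> ys = y"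
    using ly xs by auto
  also have "\<dots> \<longleftrightarrow> hd ys = v \<and> (\<forall>k<m. \<omega> (take (Suc k) ys) = ys ! Suc k) \<and> \<omega> ys = y"
    using Suc(1)[OF ly] by auto
  also have "\<dots> \<longleftrightarrow> hd xs = v \<and> (\<forall>k<Suc m. \<omega> (take (Suc k) xs) = xs ! Suc k)"
  proof -
    have "hd xs = hd ys" using xs ly by (cases ys) auto
    moreover have "\<forall>k<m. take (Suc k) xs = take (Suc k) ys \<and> xs ! Suc k = ys ! Suc k"
      using xs ly by (auto simp: nth_append)
    moreover have "take (Suc m) xs = ys" "xs ! Suc m = y" using xs ly by (auto simp: nth_append)
    ultimately show ?thesis by (auto simp: less_Suc_eq)
  qed
  finally show ?case .
qed

lemma meas_hist:
  "(\<lambda>\<omega>. hist v \<omega> k) \<in> measurable (PiM UNIV (\<lambda>h. measure_pmf (D h))) (count_space (UNIV::'v::countable list set))"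
proof (induct k)
  case 0 then show ?case by simp
next
  case (Suc k)
  have "(\<lambda>\<omega>. (\<lambda>h \<omega>. h @ [\<omega> h]) (hist v \<omega> k) \<omega>) \<in> measurable (PiM UNIV (\<lambda>h. measure_pmf (D h))) (count_space UNIV)"
  proof (rule measurable_compose_countable[OF _ Suc])
    fix h :: "'v list"
    have "(\<lambda>\<omega>. \<omega> h) \<in> measurable (PiM UNIV (\<lambda>h. measure_pmf (D h))) (measure_pmf (D h))"
      by (rule measurable_component_singleton) simp
    then show "(\<lambda>\<omega>. h @ [\<omega> h]) \<in> measurable (PiM UNIV (\<lambda>h. measure_pmf (D h))) (count_space UNIV)"
      by (rule measurable_compose) simp
  qed
  then show ?case by simp
qed

lemma meas_runF:
  "runF v \<in> measurable (PiM UNIV (\<lambda>h. measure_pmf (D h))) (stream_space (count_space (UNIV::'v::countable set)))"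
proof (rule measurable_stream_space2)
  fix n
  have "(\<lambda>\<omega>. last (hist v \<omega> n)) \<in> measurable (PiM UNIV (\<lambda>h. measure_pmf (D h))) (count_space UNIV)"
    by (rule measurable_compose[OF meas_hist]) simp
  then show "(\<lambda>x. runF v x !! n) \<in> measurable (PiM UNIV (\<lambda>h. measure_pmf (D h))) (count_space UNIV)"
    by (simp add: runF_def)
qed

lemma charM_exists:
  fixes v :: "'v::countable"
  shows "charM D v (distr (PiM UNIV (\<lambda>h. measure_pmf (D h))) (stream_space (count_space UNIV)) (runF v))"
proof -
  let ?P = "PiM UNIV (\<lambda>h. measure_pmf (D h))"
  let ?S = "stream_space (count_space (UNIV::'v set))"
  interpret P: product_prob_space "\<lambda>h. measure_pmf (D h)" UNIV by unfold_locales
  have ps: "prob_space (distr ?P ?S (runF v))" by (rule P.prob_space_distr[OF meas_runF])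
  have sS: "space ?S = UNIV" by (simp add: space_stream_space)
  have "measure (distr ?P ?S (runF v)) {\<omega>\<in>space (distr ?P ?S (runF v)). stake (length xs) \<omega> = xs} = pp D v xs" for xs
  proof -
    have A: "{\<omega>\<in>space ?S. stake (length xs) \<omega> = xs} \<in> sets ?S"
      using sstart_sets[of UNIV xs] cyl_sstart[of xs] sS by simp
    have "measure (distr ?P ?S (runF v)) {\<omega>\<in>space (distr ?P ?S (runF v)). stake (length xs) \<omega> = xs}
       = measure ?P (runF v -` {\<omega>\<in>space ?S. stake (length xs) \<omega> = xs} \<inter> space ?P)"
      using measure_distr[OF meas_runF A] by simp
    also have "\<dots> = pp D v xs"
    proof (cases "xs = []")
      case True
      then show ?thesis using P.P.prob_space by (simp add: pp_def sS)
    next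
      case False
      define m where "m = length xs - 1"
      have lx: "length xs = Suc m" using False by (simp add: m_def)
      have eq1: "runF v -` {\<omega>\<in>space ?S. stake (length xs) \<omega> = xs} \<inter> space ?P
          = {\<omega>\<in>space ?P. hd xs = v \<and> (\<forall>k<m. \<omega> (take (Suc k) xs) = xs ! Suc k)}"
        using hist_eq_iff[OF lx] stake_runF[of m v] by (auto simp: lx sS)
      show ?thesis
      proof (cases "hd xs = v")
        case False
        then show ?thesis using eq1 \<open>xs \<noteq> []\<close> by (simp add: pp_def)
      next
        case True
        define J where "J = (\<lambda>k. take (Suc k) xs) ` {..<m}"
        have inj: "inj_on (\<lambda>k. take (Suc k) xs) {..<m}"
        proof (rule inj_onI)
          fix a b assume "a \<in> {..<m}" "b \<in> {..<m}" "take (Suc a) xs = take (Suc b) xs"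
          then have "length (take (Suc a) xs) = length (take (Suc b) xs)" by simp
          with \<open>a \<in> {..<m}\<close> \<open>b \<in> {..<m}\<close> lx show "a = b" by simp
        qed
        have eq2: "{\<omega>\<in>space ?P. hd xs = v \<and> (\<forall>k<m. \<omega> (take (Suc k) xs) = xs ! Suc k)}
           = {\<omega>\<in>space ?P. \<forall>j\<in>J. \<omega> j \<in> {xs ! length j}}"
          using True lx by (auto simp: J_def)
        have "emeasure ?P {\<omega>\<in>space ?P. \<forall>j\<in>J. \<omega> j \<in> {xs ! length j}}
            = (\<Prod>j\<in>J. emeasure (measure_pmf (D j)) {xs ! length j})"
          by (rule P.emeasure_PiM_Collect) (auto simp: J_def)
        also have "\<dots> = (\<Prod>k<m. emeasure (measure_pmf (D (take (Suc k) xs))) {xs ! Suc k})"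
          unfolding J_def using lx by (subst prod.reindex[OF inj]) auto
        also have "\<dots> = (\<Prod>k<m. ennreal (pmf (D (take (Suc k) xs)) (xs ! Suc k)))"
          by (simp add: emeasure_pmf_single)
        also have "\<dots> = ennreal (\<Prod>k<m. pmf (D (take (Suc k) xs)) (xs ! Suc k))"
          by (rule prod_ennreal) simp
        finally have "measure ?P {\<omega>\<in>space ?P. \<forall>j\<in>J. \<omega> j \<in> {xs ! length j}}
            = (\<Prod>k<m. pmf (D (take (Suc k) xs)) (xs ! Suc k))"
          by (simp add: measure_def prod_nonneg)
        then show ?thesis using eq1 eq2 True False by (simp add: pp_def m_def)
      qed
    qed
    finally show ?thesis .
  qed
  then show ?thesis using ps by (simp add: charM_def)
qed

lemma play_char:
  "charM (next_pmf E V0 V1 \<pi>0 \<pi>1) (v::'v::finite) (play_measure E V0 V1 \<pi>0 \<pi>1 v)"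
proof -
  have ex: "\<exists>!M. charM (next_pmf E V0 V1 \<pi>0 \<pi>1) v M"
    using charM_exists charM_unique by blast
  show ?thesis
    unfolding play_measure_def prefix_prob_pp charM_def[symmetric]
    by (rule theI'[OF ex])
qed

lemma play_eq:
  "charM (next_pmf E V0 V1 \<pi>0 \<pi>1) (v::'v::finite) M \<Longrightarrow> play_measure E V0 V1 \<pi>0 \<pi>1 v = M"
  using play_char charM_unique by blast

lemma prod_split_add: "(\<Prod>k<a+b. g k) = (\<Prod>k<a. g k) * (\<Prod>j<b. g (a+j))"
  for g :: "nat \<Rightarrow> real"
  by (induct b) (simp_all add: mult.assoc)

lemma pp_append:
  assumes xs: "xs \<noteq> []" "hd xs = v0" and ys: "ys \<noteq> []" and hy: "hd ys = last xs"
    and DD: "\<And>t. t \<noteq> [] \<Longrightarrow> D' (butlast xs @ t) = D t"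
  shows "pp D' v0 (butlast xs @ ys) = pp D' v0 xs * pp D (last xs) ys"
proof -
  define n where "n = length xs - 1"
  define m where "m = length ys - 1"
  define bx where "bx = butlast xs"
  have lbx: "length bx = n" by (simp add: bx_def n_def)
  have lys: "length ys = Suc m" using ys by (simp add: m_def)
  have lxs: "length xs = Suc n" using xs by (simp add: n_def)
  have hdz: "hd (bx @ ys) = v0"
  proof (cases "bx = []")
    case True
    then have "n = 0" using lbx by simp
    then have "length xs = 1" using lxs by simp
    then have "last xs = hd xs" by (cases xs) auto
    then show ?thesis using True hy xs(2) by simp
  next
    case False
    have eq: "xs = bx @ [last xs]" using xs(1) by (simp add: bx_def)
    have "hd xs = hd (bx @ [last xs])" using eq by (rule arg_cong)
    also have "\<dots> = hd bx" using False by simp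
    finally show ?thesis using False xs(2) by simp
  qed
  define g where "g k = pmf (D' (take (Suc k) (bx @ ys))) ((bx @ ys) ! Suc k)" for k
  have "pp D' v0 (bx @ ys) = (\<Prod>k<n+m. g k)"
    using hdz lbx lys ys by (simp add: pp_def g_def)
  also have "\<dots> = (\<Prod>k<n. g k) * (\<Prod>j<m. g (n+j))"
    by (rule prod_split_add)
  finally have split: "pp D' v0 (bx @ ys) = (\<Prod>k<n. g k) * (\<Prod>j<m. g (n+j))" .
  have A: "(\<Prod>k<n. g k) = pp D' v0 xs"
  proof -
    have "(\<Prod>k<n. g k) = (\<Prod>k<n. pmf (D' (take (Suc k) xs)) (xs ! Suc k))"
    proof (rule prod.cong[OF refl])
      fix k assume k: "k \<in> {..<n}"
      have t: "take (Suc k) (bx @ ys) = take (Suc k) xs"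
        using k lbx by (simp add: bx_def take_butlast)
      have "(bx @ ys) ! Suc k = xs ! Suc k"
      proof (cases "Suc k < n")
        case True
        then show ?thesis using lbx by (simp add: nth_append bx_def nth_butlast)
      next
        case False
        then have sk: "Suc k = n" using k by simp
        have "(bx @ ys) ! Suc k = ys ! 0" using lbx sk by (simp add: nth_append)
        also have "\<dots> = last xs" using hd_conv_nth[OF ys] hy by simp
        also have "\<dots> = xs ! Suc k" using last_conv_nth[OF xs(1)] sk by (simp add: n_def)
        finally show ?thesis .
      qed
      then show "g k = pmf (D' (take (Suc k) xs)) (xs ! Suc k)" using t by (simp add: g_def)
    qed
    also have "\<dots> = pp D' v0 xs" using xs lxs by (simp add: pp_def)
    finally show ?thesis .
  qed
  have B: "(\<Prod>j<m. g (n+j)) = pp D (last xs) ys"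
  proof -
    have "(\<Prod>j<m. g (n+j)) = (\<Prod>j<m. pmf (D (take (Suc j) ys)) (ys ! Suc j))"
    proof (rule prod.cong[OF refl])
      fix j assume j: "j \<in> {..<m}"
      have "take (Suc (n+j)) (bx @ ys) = bx @ take (Suc j) ys"
        using lbx by simp
      moreover have "(bx @ ys) ! Suc (n+j) = ys ! Suc j" using lbx by (simp add: nth_append)
      moreover have "D' (bx @ take (Suc j) ys) = D (take (Suc j) ys)"
        unfolding bx_def by (rule DD) (use ys in simp)
      ultimately show "g (n+j) = pmf (D (take (Suc j) ys)) (ys ! Suc j)" by (simp add: g_def)
    qed
    also have "\<dots> = pp D (last xs) ys" using ys hy lys by (simp add: pp_def)
    finally show ?thesis .
  qed
  show ?thesis using split A B by (simp add: bx_def)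
qed

lemma stake_split:
  assumes "xs \<noteq> []" "ys \<noteq> []" "hd ys = last xs"
  shows "(stake (length xs) \<omega> = xs \<and> stake (length ys) (sdrop (length xs - 1) \<omega>) = ys)
     \<longleftrightarrow> stake (length (butlast xs @ ys)) \<omega> = butlast xs @ ys"
proof -
  let ?n = "length xs - 1"
  have lx: "length xs = Suc ?n" using assms by simp
  have xs: "xs = butlast xs @ [last xs]" using assms by simp
  have l1: "stake (length xs) \<omega> = stake ?n \<omega> @ [\<omega> !! ?n]" using lx stake_Suc by metis
  have l2: "stake (length (butlast xs @ ys)) \<omega> = stake ?n \<omega> @ stake (length ys) (sdrop ?n \<omega>)"
    using stake_add[of ?n \<omega> "length ys"] by simp
  have hd: "stake (length ys) (sdrop ?n \<omega>) = ys \<Longrightarrow> \<omega> !! ?n = last xs"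
  proof -
    assume a: "stake (length ys) (sdrop ?n \<omega>) = ys"
    have "ys ! 0 = stake (length ys) (sdrop ?n \<omega>) ! 0" using a by simp
    also have "\<dots> = \<omega> !! ?n" using assms by (simp add: sdrop_snth)
    finally show ?thesis using assms by (simp add: hd_conv_nth)
  qed
  have "stake (length xs) \<omega> = xs \<longleftrightarrow> stake ?n \<omega> = butlast xs \<and> \<omega> !! ?n = last xs"
    using l1 xs by (metis append1_eq_conv)
  moreover have "stake (length (butlast xs @ ys)) \<omega> = butlast xs @ ys \<longleftrightarrow>
      stake ?n \<omega> = butlast xs \<and> stake (length ys) (sdrop ?n \<omega>) = ys"
  proof -
    have "length (stake ?n \<omega>) = length (butlast xs)" by simp
    then show ?thesis unfolding l2 using append_eq_append_conv by blast
  qed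
  ultimately show ?thesis using hd by blast
qed

lemma bad_imp:
  assumes "\<not> ev (ev (alw (holds (\<lambda>x. x \<notin> B i)) or holds (\<lambda>x. \<exists>j\<in>{i+1..l}. even j \<and> x \<in> B j))) (sdrop n \<omega>)"
    and "i \<in> {1..l}" "odd i"
  shows "\<not> Parity B l \<omega>"
proof -
  have H1: "\<forall>m. \<exists>k. \<omega> !! (n+m+k) \<in> B i" and H2: "\<forall>m j. j\<in>{i+1..l} \<longrightarrow> even j \<longrightarrow> \<omega> !! (n+m) \<notin> B j"
    using assms(1) by (auto simp: ev_iff_sdrop alw_iff_sdrop sdrop_snth add.assoc)
  have "alw (ev (holds (\<lambda>x. x \<in> B i))) \<omega>"
    unfolding alw_iff_sdrop ev_iff_sdrop
  proof
    fix m
    obtain k where "\<omega> !! (n+m+k) \<in> B i" using H1 by blast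
    then show "\<exists>k. holds (\<lambda>x. x \<in> B i) (sdrop k (sdrop m \<omega>))"
      by (intro exI[of _ "n+k"]) (simp add: sdrop_snth ac_simps)
  qed
  moreover have "\<not> alw (ev (holds (\<lambda>x. x \<in> B j))) \<omega>" if "j\<in>{i+1..l}" "even j" for j
  proof
    assume "alw (ev (holds (\<lambda>x. x \<in> B j))) \<omega>"
    then obtain k where "holds (\<lambda>x. x \<in> B j) (sdrop k (sdrop n \<omega>))"
      unfolding alw_iff_sdrop ev_iff_sdrop by blast
    then show False using H2 that by (simp add: sdrop_snth ac_simps)
  qed
  ultimately show ?thesis using assms(2,3) unfolding Parity_def by blast
qed

lemma key:
  fixes E :: "('v::finite \<times> 'v) set" and V0 V1 :: "'v set"
    and B :: "nat \<Rightarrow> 'v set" and l :: nat and v0 :: 'v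
    and \<pi>0 \<pi>1 \<pi>1w :: "'v list \<Rightarrow> 'v pmf"
  assumes dm: "det_memoryless E V0 \<pi>0"
    and s1: "strategy E V1 \<pi>1" and sw: "strategy E V1 \<pi>1w"
    and xs: "xs \<noteq> []" "hd xs = v0"
    and pos: "pp (next_pmf E V0 V1 \<pi>0 \<pi>1w) v0 xs > 0"
    and par: "\<And>\<pi>. strategy E V1 \<pi> \<Longrightarrow> measure (play_measure E V0 V1 \<pi>0 \<pi> v0) {\<omega>. Parity B l \<omega>} = 1"
    and i: "i \<in> {1..l}" "odd i"
  shows "measure (play_measure E V0 V1 \<pi>0 \<pi>1 (last xs))
           {\<omega>. ev (ev (alw (holds (\<lambda>x. x \<notin> B i))
                  or holds (\<lambda>x. \<exists>j\<in>{i+1..l}. even j \<and> x \<in> B j))) \<omega>} = 1"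
proof -
  let ?S = "stream_space (count_space (UNIV::'v set))"
  define n where "n = length xs - 1"
  define bx where "bx = butlast xs"
  have lbx: "length bx = n" by (simp add: bx_def n_def)
  define \<pi>1' where "\<pi>1' h = (if n < length h \<and> take n h = bx then \<pi>1 (drop n h) else \<pi>1w h)" for h
  have st': "strategy E V1 \<pi>1'"
    unfolding strategy_def
  proof (intro allI impI)
    fix h :: "'v list" assume h: "h \<noteq> []" "last h \<in> V1"
    show "set_pmf (\<pi>1' h) \<subseteq> E `` {last h}"
    proof (cases "n < length h \<and> take n h = bx")
      case True
      then have "drop n h \<noteq> []" "last (drop n h) = last h" by auto
      then show ?thesis using s1 True h unfolding strategy_def \<pi>1'_def by metis
    next
      case False
      then have "\<pi>1' h = \<pi>1w h" unfolding \<pi>1'_def by (rule if_not_P)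
      then show ?thesis using sw h unfolding strategy_def by simp
    qed
  qed
  define D' where "D' = next_pmf E V0 V1 \<pi>0 \<pi>1'"
  define Dw where "Dw = next_pmf E V0 V1 \<pi>0 \<pi>1w"
  define D where "D = next_pmf E V0 V1 \<pi>0 \<pi>1"
  obtain f where f: "\<And>h. h \<noteq> [] \<Longrightarrow> last h \<in> V0 \<Longrightarrow> \<pi>0 h = return_pmf (f (last h))"
    using dm unfolding det_memoryless_def by blast
  have Dw_eq: "D' h = Dw h" if "length h \<le> n" for h
    using that by (simp add: D'_def Dw_def next_pmf_def \<pi>1'_def)
  have D_eq: "D' (bx @ t) = D t" if "t \<noteq> []" for t
  proof -
    have "\<pi>1' (bx @ t) = \<pi>1 t" using that lbx by (simp add: \<pi>1'_def)
    moreover have "last t \<in> V0 \<Longrightarrow> \<pi>0 (bx @ t) = \<pi>0 t" using f[of t] f[of "bx @ t"] that by simp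
    ultimately show ?thesis using that by (simp add: D'_def D_def next_pmf_def)
  qed
  have pxs: "pp D' v0 xs = pp Dw v0 xs"
    unfolding pp_def
    by (intro if_cong refl prod.cong) (simp add: Dw_eq n_def)
  define p where "p = pp D' v0 xs"
  have ppos: "p > 0" using pos pxs by (simp add: p_def Dw_def)
  define Mv where "Mv = play_measure E V0 V1 \<pi>0 \<pi>1' v0"
  have cMv: "charM D' v0 Mv" unfolding Mv_def D'_def by (rule play_char)
  interpret Mv: prob_space Mv using cMv by (simp add: charM_def)
  have setsMv: "sets Mv = sets ?S" using cMv by (simp add: charM_def)
  have sMv: "space Mv = UNIV" using setsMv by (rule space_S)
  have sS: "space ?S = UNIV" by (simp add: space_stream_space)
  have cylMv: "measure Mv {\<omega>. stake (length zs) \<omega> = zs} = pp D' v0 zs" for zs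
    using cMv sMv by (simp add: charM_def)
  have cylsets: "{\<omega>. stake (length zs) \<omega> = zs} \<in> sets ?S" for zs :: "'v list"
    using sstart_sets[of UNIV zs] cyl_sstart[of zs] by simp
  define C where "C = {\<omega>. stake (length xs) \<omega> = xs}"
  have C: "C \<in> sets Mv" using cylsets setsMv by (simp add: C_def)
  have mC: "measure Mv C = p" by (simp add: C_def cylMv p_def)
  have eC: "emeasure Mv C = ennreal p" using mC Mv.emeasure_eq_measure by simp
  define U where "U = uniform_measure Mv C"
  have pU: "prob_space U" unfolding U_def
    by (rule prob_space_uniform_measure) (use eC ppos in auto)
  have sd: "sdrop n \<in> measurable U ?S"
  proof -
    have "measurable U ?S = measurable ?S ?S"
      by (rule measurable_cong_sets) (simp_all add: U_def setsMv)
    then show ?thesis by simp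
  qed
  define N where "N = distr U ?S (sdrop n)"
  have pN: "prob_space N" unfolding N_def by (rule prob_space.prob_space_distr[OF pU sd])
  have setsN: "sets N = sets ?S" by (simp add: N_def)
  have sN: "space N = UNIV" using setsN by (rule space_S)
  have Nmeas: "measure N A = measure Mv (C \<inter> sdrop n -` A) / p" if A: "A \<in> sets ?S" for A
  proof -
    have X: "sdrop n -` A \<in> sets Mv"
      using measurable_sets[OF measurable_sdrop A, of n] setsMv sS by simp
    have "measure N A = measure U (sdrop n -` A \<inter> space U)"
      unfolding N_def by (rule measure_distr[OF sd A])
    also have "\<dots> = enn2real (emeasure Mv (C \<inter> sdrop n -` A) / emeasure Mv C)"
      using X C sMv by (simp add: U_def measure_def)
    also have "\<dots> = measure Mv (C \<inter> sdrop n -` A) / p"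
      using eC ppos by (simp add: Mv.emeasure_eq_measure divide_ennreal)
    finally show ?thesis .
  qed
  have cN: "charM D (last xs) N"
    unfolding charM_def
  proof (intro conjI pN setsN allI)
    fix ys :: "'v list"
    have "measure N {\<omega>. stake (length ys) \<omega> = ys} = pp D (last xs) ys"
    proof -
      have m: "measure N {\<omega>. stake (length ys) \<omega> = ys} =
          measure Mv (C \<inter> sdrop n -` {\<omega>. stake (length ys) \<omega> = ys}) / p"
        by (rule Nmeas[OF cylsets])
      show ?thesis
      proof (cases "ys = []")
        case True
        then show ?thesis using m mC ppos by (simp add: pp_def)
      next
        case ys: False
        show ?thesis
        proof (cases "hd ys = last xs")
          case False
          have "C \<inter> sdrop n -` {\<omega>. stake (length ys) \<omega> = ys} = {}"
          proof (rule ccontr)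
            assume "C \<inter> sdrop n -` {\<omega>. stake (length ys) \<omega> = ys} \<noteq> {}"
            then obtain \<omega> where w: "stake (length xs) \<omega> = xs" "stake (length ys) (sdrop n \<omega>) = ys"
              by (auto simp: C_def)
            have "hd ys = \<omega> !! n"
              using w(2) ys by (metis hd_conv_nth length_greater_0_conv sdrop_simps(1) stake_nth snth.simps(1))
            moreover have "last xs = \<omega> !! n"
              using w(1) xs by (metis n_def diff_less last_conv_nth length_greater_0_conv stake_nth zero_less_one)
            ultimately show False using False by simp
          qed
          then show ?thesis using m ys False by (simp add: pp_def)
        next
          case True
          have "C \<inter> sdrop n -` {\<omega>. stake (length ys) \<omega> = ys} = {\<omega>. stake (length (bx @ ys)) \<omega> = bx @ ys}"
            using stake_split[OF xs(1) ys True] by (auto simp: C_def bx_def n_def)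
          then have m2: "measure N {\<omega>. stake (length ys) \<omega> = ys} = pp D' v0 (bx @ ys) / p"
            using m cylMv[of "bx @ ys"] by simp
          have "pp D' v0 (bx @ ys) = p * pp D (last xs) ys"
            unfolding p_def bx_def
            by (rule pp_append[OF xs ys True]) (use D_eq in \<open>simp add: bx_def\<close>)
          then show ?thesis using m2 ppos by simp
        qed
      qed
    qed
    then show "measure N {\<omega> \<in> space N. stake (length ys) \<omega> = ys} = pp D (last xs) ys"
      using sN by simp
  qed
  have eqN: "play_measure E V0 V1 \<pi>0 \<pi>1 (last xs) = N"
    using cN unfolding D_def by (rule play_eq)
  define T where "T = {\<omega>. ev (ev (alw (holds (\<lambda>x. x \<notin> B i))
                  or holds (\<lambda>x. \<exists>j\<in>{i+1..l}. even j \<and> x \<in> B j))) \<omega>}"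
  have pc[measurable]: "Measurable.pred (count_space UNIV) P" for P :: "'v \<Rightarrow> bool" by simp
  have "Measurable.pred ?S (\<lambda>\<omega>. ev (ev (alw (holds (\<lambda>x. x \<notin> B i))
                  or holds (\<lambda>x. \<exists>j\<in>{i+1..l}. even j \<and> x \<in> B j))) \<omega>)"
    by measurable
  from predE[OF this] have T: "T \<in> sets ?S"
    unfolding T_def sS by simp
  have h: "Measurable.pred ?S (\<lambda>\<omega>. alw (ev (holds (\<lambda>x. x \<in> B k))) \<omega>)" for k
    by measurable
  have c: "Measurable.pred ?S (\<lambda>\<omega>. c)" for c by simp
  have "Measurable.pred ?S (Parity B l)"
    unfolding Parity_def
    by (intro pred_intros_countable_bounded pred_intros_logic h c)
  from predE[OF this] have Par: "{\<omega>. Parity B l \<omega>} \<in> sets ?S"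
    unfolding sS by simp
  have mPar: "measure Mv {\<omega>. Parity B l \<omega>} = 1" using par[OF st'] by (simp add: Mv_def)
  have mnPar: "measure Mv (UNIV - {\<omega>. Parity B l \<omega>}) = 0"
    using Mv.prob_compl[of "{\<omega>. Parity B l \<omega>}"] Par setsMv sMv mPar by simp
  have eqNT: "measure N (UNIV - T) = measure Mv (C \<inter> sdrop n -` (UNIV - T)) / p"
    using sets.compl_sets[OF T] sS by (intro Nmeas) simp
  have leT: "measure Mv (C \<inter> sdrop n -` (UNIV - T)) \<le> measure Mv (UNIV - {\<omega>. Parity B l \<omega>})"
  proof (rule Mv.finite_measure_mono)
    show "C \<inter> sdrop n -` (UNIV - T) \<subseteq> UNIV - {\<omega>. Parity B l \<omega>}"
    proof
      fix \<omega> assume "\<omega> \<in> C \<inter> sdrop n -` (UNIV - T)"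
      then have "sdrop n \<omega> \<notin> T" by simp
      then have "\<not> ev (ev (alw (holds (\<lambda>x. x \<notin> B i))
                  or holds (\<lambda>x. \<exists>j\<in>{i+1..l}. even j \<and> x \<in> B j))) (sdrop n \<omega>)"
        unfolding T_def by (rule contrapos_nn) (rule CollectI)
      from bad_imp[OF this i] show "\<omega> \<in> UNIV - {\<omega>. Parity B l \<omega>}" by simp
    qed
    have "space Mv - {\<omega>. Parity B l \<omega>} \<in> sets Mv"
      by (rule sets.compl_sets) (use Par setsMv in simp)
    then show "UNIV - {\<omega>. Parity B l \<omega>} \<in> sets Mv" using sMv by simp
  qed
  have "measure N (UNIV - T) \<le> 0" using eqNT leT mnPar ppos by (simp add: divide_le_0_iff)
  moreover have "measure N (UNIV - T) = 1 - measure N T"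
    using prob_space.prob_compl[OF pN, of T] T setsN sN by simp
  moreover have "measure N T \<le> 1" using prob_space.prob_le_1[OF pN] .
  ultimately have "measure N T = 1" by simp
  then show ?thesis using eqN by (simp add: T_def)
qed

theorem lemma3:
  fixes E :: "('v::finite \<times> 'v) set" and V0 V1 Vr :: "'v set"
    and B :: "nat \<Rightarrow> 'v set" and l :: nat and v0 :: 'v
    and \<pi>0 :: "'v list \<Rightarrow> 'v pmf"
  assumes "game_graph E V0 V1 Vr"
    and "parity_game E B l"
    and "det_memoryless E V0 \<pi>0"
    and "(INF \<pi>1 \<in> {\<pi>. strategy E V1 \<pi>}.
            measure (play_measure E V0 V1 \<pi>0 \<pi>1 v0) {\<omega>. Parity B l \<omega>}) = 1"
  shows "\<forall>xs. xs \<noteq> [] \<and> hd xs = v0 \<and>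
           (\<exists>\<pi>1. strategy E V1 \<pi>1 \<and>
              measure (play_measure E V0 V1 \<pi>0 \<pi>1 v0)
                {\<omega> \<in> space (play_measure E V0 V1 \<pi>0 \<pi>1 v0). stake (length xs) \<omega> = xs} > 0)
         \<longrightarrow> (\<forall>i\<in>{1..l}. odd i \<longrightarrow> last xs \<in> B i \<longrightarrow>
               (INF \<pi>1 \<in> {\<pi>. strategy E V1 \<pi>}.
                  measure (play_measure E V0 V1 \<pi>0 \<pi>1 (last xs))
                    {\<omega>. ev (ev (alw (holds (\<lambda>x. x \<notin> B i))
                              or holds (\<lambda>x. \<exists>j\<in>{i+1..l}. even j \<and> x \<in> B j))) \<omega>}) = 1)"
proof (intro allI impI ballI)
  fix xs i
  assume H: "xs \<noteq> [] \<and> hd xs = v0 \<and>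
           (\<exists>\<pi>1. strategy E V1 \<pi>1 \<and>
              measure (play_measure E V0 V1 \<pi>0 \<pi>1 v0)
                {\<omega> \<in> space (play_measure E V0 V1 \<pi>0 \<pi>1 v0). stake (length xs) \<omega> = xs} > 0)"
    and i: "i \<in> {1..l}" and oi: "odd i" and lx: "last xs \<in> B i"
  from H obtain \<pi>1w where sw: "strategy E V1 \<pi>1w" and posm:
    "measure (play_measure E V0 V1 \<pi>0 \<pi>1w v0)
        {\<omega> \<in> space (play_measure E V0 V1 \<pi>0 \<pi>1w v0). stake (length xs) \<omega> = xs} > 0"
    by blast
  have pos: "pp (next_pmf E V0 V1 \<pi>0 \<pi>1w) v0 xs > 0"
    using posm play_char[of E V0 V1 \<pi>0 \<pi>1w v0] by (simp add: charM_def)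
  let ?Str = "{\<pi>. strategy E V1 \<pi>}"
  have par: "measure (play_measure E V0 V1 \<pi>0 \<pi> v0) {\<omega>. Parity B l \<omega>} = 1"
    if st: "strategy E V1 \<pi>" for \<pi>
  proof -
    have bdd: "bdd_below ((\<lambda>\<pi>. measure (play_measure E V0 V1 \<pi>0 \<pi> v0) {\<omega>. Parity B l \<omega>}) ` ?Str)"
      by (rule bdd_belowI[of _ 0]) auto
    have "1 \<le> measure (play_measure E V0 V1 \<pi>0 \<pi> v0) {\<omega>. Parity B l \<omega>}"
      using cINF_lower[OF bdd, of \<pi>] st assms(4) by simp
    moreover have "prob_space (play_measure E V0 V1 \<pi>0 \<pi> v0)"
      using play_char[of E V0 V1 \<pi>0 \<pi> v0] by (simp add: charM_def)
    then have "measure (play_measure E V0 V1 \<pi>0 \<pi> v0) {\<omega>. Parity B l \<omega>} \<le> 1"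
      by (rule prob_space.prob_le_1)
    ultimately show ?thesis by simp
  qed
  have all1: "measure (play_measure E V0 V1 \<pi>0 \<pi>1 (last xs))
           {\<omega>. ev (ev (alw (holds (\<lambda>x. x \<notin> B i))
                  or holds (\<lambda>x. \<exists>j\<in>{i+1..l}. even j \<and> x \<in> B j))) \<omega>} = 1"
    if "strategy E V1 \<pi>1" for \<pi>1
    using key[OF assms(3) that sw _ _ pos par i oi] H by blast
  have ne: "?Str \<noteq> {}"
  proof -
    define \<pi>s where "\<pi>s h = return_pmf (SOME y. (last h, y) \<in> E)" for h :: "'v list"
    have "strategy E V1 \<pi>s"
      unfolding strategy_def
    proof (intro allI impI)
      fix h :: "'v list"
      have "E `` {last h} \<noteq> {}" using assms(1) by (simp add: game_graph_def)
      then have "\<exists>y. (last h, y) \<in> E" by blast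
      then have "(last h, SOME y. (last h, y) \<in> E) \<in> E" by (rule someI_ex)
      then show "set_pmf (\<pi>s h) \<subseteq> E `` {last h}" by (simp add: \<pi>s_def)
    qed
    then show ?thesis by blast
  qed
  have "(INF \<pi>1 \<in> ?Str. measure (play_measure E V0 V1 \<pi>0 \<pi>1 (last xs))
           {\<omega>. ev (ev (alw (holds (\<lambda>x. x \<notin> B i))
                  or holds (\<lambda>x. \<exists>j\<in>{i+1..l}. even j \<and> x \<in> B j))) \<omega>}) = (INF \<pi>1 \<in> ?Str. (1::real))"
    by (rule INF_cong[OF refl], rule all1, simp)
  also have "\<dots> = 1" using ne by (rule cINF_const)
  finally show "(INF \<pi>1 \<in> ?Str. measure (play_measure E V0 V1 \<pi>0 \<pi>1 (last xs))
           {\<omega>. ev (ev (alw (holds (\<lambda>x. x \<notin> B i))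
                  or holds (\<lambda>x. \<exists>j\<in>{i+1..l}. even j \<and> x \<in> B j))) \<omega>}) = 1" .
qed

end
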